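(* Let $N$ be a positive odd integer and $\alpha,\beta$ real; put $\sigma=\alpha+\beta$. Define the rational functions $$E_1(x)=\frac{(x+\sigma+3)(x+\alpha-\beta+1)(x-\sigma-2N+1)}{4(x+1)(x+3)},\qquad E_2(x)=-\frac{(x-\sigma-1)(x+\beta-\alpha-3)(x+\sigma+2N+1)}{4(x-1)(x-3)},$$ $$G_1(x)=\frac{\sigma(\sigma+2+2N)(x+1+\alpha-\beta)}{(1-x^2)(x+3)},\qquad G_2(x)=\frac{(\alpha-\beta)(x-\sigma-1)(x+\sigma+2N+1)}{(1-x^2)(x-3)},$$ and the operator $$(Hf)(x)=E_1(x)\big(f(x+4)-f(x)\big)+E_2(x)\big(f(x-4)-f(x)\big)+G_1(x)\big(f(-x-2)-f(x)\big)+G_2(x)\big(f(-x+2)-f(x)\big).$$ Then for every $n\in\{0,1,\dots,N\}$ the monic dual $-1$ Hahn polynomial $P_n$ satisfies $(HP_n)(x)=2n\,P_n(x)$ for all $x\notin\{\pm1,\pm3\}$ (in particular $HP_n$ is a polynomial of degree $n$).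
   Context: For $N$ odd: $b_n^{(-1)}=-1-\alpha+\beta$ for $n$ even, $b_n^{(-1)}=-1+\alpha-\beta$ for $n$ odd; $u_n^{(-1)}=4n(N+1-n)$ for $n$ even, $u_n^{(-1)}=4(\alpha+n)(\beta+N+1-n)$ for $n$ odd. The monic dual $-1$ Hahn polynomials are defined by $P_{-1}=0$, $P_0=1$, $P_{n+1}(x)=(x-b_n^{(-1)})P_n(x)-u_n^{(-1)}P_{n-1}(x)$ for $n\ge0$. *)

theory Defs
  imports Complex_Main
begin

text \<open>Recurrence coefficients of the dual -1 Hahn polynomials (N odd case).\<close>

definition bcoef :: "nat \<Rightarrow> real \<Rightarrow> real \<Rightarrow> nat \<Rightarrow> real" where
  "bcoef N \<alpha> \<beta> n = (if even n then -1 - \<alpha> + \<beta> else -1 + \<alpha> - \<beta>)"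

definition ucoef :: "nat \<Rightarrow> real \<Rightarrow> real \<Rightarrow> nat \<Rightarrow> real" where
  "ucoef N \<alpha> \<beta> n = (if even n then 4 * real n * (real N + 1 - real n)
                      else 4 * (\<alpha> + real n) * (\<beta> + real N + 1 - real n))"

fun dhP :: "nat \<Rightarrow> real \<Rightarrow> real \<Rightarrow> nat \<Rightarrow> real \<Rightarrow> real" where
  "dhP N \<alpha> \<beta> 0 x = 1"
| "dhP N \<alpha> \<beta> (Suc 0) x = x - bcoef N \<alpha> \<beta> 0"
| "dhP N \<alpha> \<beta> (Suc (Suc n)) x =
     (x - bcoef N \<alpha> \<beta> (Suc n)) * dhP N \<alpha> \<beta> (Suc n) x
     - ucoef N \<alpha> \<beta> (Suc n) * dhP N \<alpha> \<beta> n x"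

definition E1 :: "nat \<Rightarrow> real \<Rightarrow> real \<Rightarrow> real \<Rightarrow> real" where
  "E1 N \<alpha> \<beta> x = (let \<sigma> = \<alpha> + \<beta> in
     (x + \<sigma> + 3) * (x + \<alpha> - \<beta> + 1) * (x - \<sigma> - 2 * real N + 1) / (4 * (x + 1) * (x + 3)))"

definition E2 :: "nat \<Rightarrow> real \<Rightarrow> real \<Rightarrow> real \<Rightarrow> real" where
  "E2 N \<alpha> \<beta> x = (let \<sigma> = \<alpha> + \<beta> in
     - ((x - \<sigma> - 1) * (x + \<beta> - \<alpha> - 3) * (x + \<sigma> + 2 * real N + 1) / (4 * (x - 1) * (x - 3))))"

definition G1 :: "nat \<Rightarrow> real \<Rightarrow> real \<Rightarrow> real \<Rightarrow> real" where
  "G1 N \<alpha> \<beta> x = (let \<sigma> = \<alpha> + \<beta> in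
     \<sigma> * (\<sigma> + 2 + 2 * real N) * (x + 1 + \<alpha> - \<beta>) / ((1 - x^2) * (x + 3)))"

definition G2 :: "nat \<Rightarrow> real \<Rightarrow> real \<Rightarrow> real \<Rightarrow> real" where
  "G2 N \<alpha> \<beta> x = (let \<sigma> = \<alpha> + \<beta> in
     (\<alpha> - \<beta>) * (x - \<sigma> - 1) * (x + \<sigma> + 2 * real N + 1) / ((1 - x^2) * (x - 3)))"

definition Hop :: "nat \<Rightarrow> real \<Rightarrow> real \<Rightarrow> (real \<Rightarrow> real) \<Rightarrow> real \<Rightarrow> real" where
  "Hop N \<alpha> \<beta> f x =
     E1 N \<alpha> \<beta> x * (f (x + 4) - f x) + E2 N \<alpha> \<beta> x * (f (x - 4) - f x)
   + G1 N \<alpha> \<beta> x * (f (- x - 2) - f x) + G2 N \<alpha> \<beta> x * (f (- x + 2) - f x)"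

end

theory Submission
  imports Defs
begin

definition Qop :: "nat \<Rightarrow> real \<Rightarrow> real \<Rightarrow> (real \<Rightarrow> real) \<Rightarrow> real \<Rightarrow> real" where
  "Qop N a b f x = E1 N a b x * 4 * f (x + 4) + E2 N a b x * (-4) * f (x - 4)
   + G1 N a b x * (-2*x-2) * f (- x - 2) + G2 N a b x * (-2*x+2) * f (- x + 2)"

definition Q2op :: "nat \<Rightarrow> real \<Rightarrow> real \<Rightarrow> (real \<Rightarrow> real) \<Rightarrow> real \<Rightarrow> real" where
  "Q2op N a b f x = E1 N a b x * 16 * f (x + 4) + E2 N a b x * 16 * f (x - 4)
   + G1 N a b x * (-2*x-2)^2 * f (- x - 2) + G2 N a b x * (-2*x+2)^2 * f (- x + 2)"

definition Piop :: "real \<Rightarrow> real \<Rightarrow> (real \<Rightarrow> real) \<Rightarrow> real \<Rightarrow> real" where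
  "Piop a b f y = f (- y - 2) + (b - a) / (y + 1) * (f y - f (- y - 2))"

lemma cancel_nz: "(T::real) * M = 0 \<Longrightarrow> M \<noteq> 0 \<Longrightarrow> T = 0" by simp

lemma abs_id:
  fixes e1 e2 g1 g2 q0 q1 q2 f0 fa fb fc fd fe x a b N K c d m S Pi0 :: real
  assumes cd: "c = -2*d" and S: "S = e1+e2+g1+g2" and P: "Pi0 = fc + q0*(f0 - fc)"
  and Cb: "16*c*e2*q2+4*c*(x+1)*g2*(1+q2) = 0"
  and Cd: "4*g2*(x-3)*(x+1)+16*c*e2*(1-q2)-4*c*(x+1)*g2*q2 = 0"
  and Cc: "4*(x+1)^2*g1 -( -2*c*(2*x+2)*g1*(-q0) + 16*g1 - 8*c*g1*(-q0) + (8*c*S-16*K)*(1-q0)) = 0"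
  and C0: "-( -4*c*(x+1)*g1*(1+q0) -16*S -8*c*g1*(1+q0) + 8*c*S*q0 +16*m -16*K*q0) = 0"
  shows "e1*16*fa + e2*16*fb + g1*(-2*x-2)^2*fc + g2*(-2*x+2)^2*fd =
   2*c*(e1*4*(fe+q1*(fa-fe))+e2*(-4)*(fd+q2*(fb-fd))+g1*(-2*x-2)*(f0+(-q0)*(fc-f0))+g2*(-2*x+2)*(fb+(-q2)*(fd-fb)))
   +16*(e1*(fa-f0)+e2*(fb-f0)+g1*(fc-f0)+g2*(fd-f0)
     +d*(e1*(fe+q1*(fa-fe)-Pi0)+e2*(fd+q2*(fb-fd)-Pi0)+g1*(f0+(-q0)*(fc-f0)-Pi0)+g2*(fb+(-q2)*(fd-fb)-Pi0))
     +m*f0-K*Pi0)"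
proof -
  have "e1*16*fa + e2*16*fb + g1*(-2*x-2)^2*fc + g2*(-2*x+2)^2*fd -
   (2*c*(e1*4*(fe+q1*(fa-fe))+e2*(-4)*(fd+q2*(fb-fd))+g1*(-2*x-2)*(f0+(-q0)*(fc-f0))+g2*(-2*x+2)*(fb+(-q2)*(fd-fb)))
   +16*(e1*(fa-f0)+e2*(fb-f0)+g1*(fc-f0)+g2*(fd-f0)
     +d*(e1*(fe+q1*(fa-fe)-Pi0)+e2*(fd+q2*(fb-fd)-Pi0)+g1*(f0+(-q0)*(fc-f0)-Pi0)+g2*(fb+(-q2)*(fd-fb)-Pi0))
     +m*f0-K*Pi0))
   = (16*c*e2*q2+4*c*(x+1)*g2*(1+q2))*fb + (4*g2*(x-3)*(x+1)+16*c*e2*(1-q2)-4*c*(x+1)*g2*q2)*fd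
     + (4*(x+1)^2*g1 -( -2*c*(2*x+2)*g1*(-q0) + 16*g1 - 8*c*g1*(-q0) + (8*c*S-16*K)*(1-q0)))*fc
     + (-( -4*c*(x+1)*g1*(1+q0) -16*S -8*c*g1*(1+q0) + 8*c*S*q0 +16*m -16*K*q0))*f0"
    unfolding cd S P by (simp add: algebra_simps power2_eq_square)
  then show ?thesis using Cb Cd Cc C0 by simp
qed

lemma dhP_suc: "dhP N a b (Suc n) y = (y - bcoef N a b n) * dhP N a b n y - ucoef N a b n * dhP N a b (n - 1) y"
  by (cases n) (simp_all add: ucoef_def)

lemma dhP_suc_fun: "dhP N a b (Suc n) = (\<lambda>y. (y - bcoef N a b n) * dhP N a b n y - ucoef N a b n * dhP N a b (n - 1) y)"
  by (rule ext) (rule dhP_suc)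

lemma dhP_0_fun: "dhP N a b 0 = (\<lambda>y. 1)" by (rule ext) simp

lemma Hop_step: "Hop N a b (\<lambda>y. (y - bb) * f y - u * g y) x
   = x * Hop N a b f x + Qop N a b f x - bb * Hop N a b f x - u * Hop N a b g x"
  unfolding Hop_def Qop_def by (simp add: algebra_simps)

lemma Qop_step: "Qop N a b (\<lambda>y. (y - bb) * f y - u * g y) x
   = x * Qop N a b f x + Q2op N a b f x - bb * Qop N a b f x - u * Qop N a b g x"
  unfolding Q2op_def Qop_def by (simp add: algebra_simps power2_eq_square)

lemma Hop_const: "Hop N a b (\<lambda>y. 1) x = 0" unfolding Hop_def by simp

lemma u0: "ucoef N a b 0 = 0" by (simp add: ucoef_def)

lemma pi_poly: "(y + 1 - (b - a)) * dhP N a b n (- y - 2) + (b - a) * dhP N a b n y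
   = (-1)^n * (y + 1) * dhP N a b n y"
proof (induction n arbitrary: y rule: less_induct)
  case (less n)
  show ?case
  proof (cases n)
    case 0 then show ?thesis by (simp add: algebra_simps)
  next
    case (Suc m)
    show ?thesis
    proof (cases m)
      case 0 then show ?thesis using Suc by (simp add: bcoef_def algebra_simps)
    next
      case (Suc k)
      have IH1: "(y + 1 - (b - a)) * dhP N a b k (- y - 2) + (b - a) * dhP N a b k y
         = (-1)^k * (y + 1) * dhP N a b k y" using less \<open>n = Suc m\<close> Suc by simp
      have IH2: "(y + 1 - (b - a)) * dhP N a b (Suc k) (- y - 2) + (b - a) * dhP N a b (Suc k) y
         = (-1)^(Suc k) * (y + 1) * dhP N a b (Suc k) y" using less \<open>n = Suc m\<close> Suc by simp
      have n: "n = Suc (Suc k)" using \<open>n = Suc m\<close> Suc by simp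
      show ?thesis
      proof (cases "even k")
        case True
        then have s: "(-1::real)^k = 1" "(-1::real)^(Suc k) = -1" "(-1::real)^(Suc (Suc k)) = 1" by simp_all
        have bb: "bcoef N a b (Suc k) = -1 + a - b" using True by (simp add: bcoef_def)
        show ?thesis unfolding n dhP.simps bb s using IH1 IH2 unfolding s by algebra
      next
        case False
        then have s: "(-1::real)^k = -1" "(-1::real)^(Suc k) = 1" "(-1::real)^(Suc (Suc k)) = -1" by simp_all
        have bb: "bcoef N a b (Suc k) = -1 - a + b" using False by (simp add: bcoef_def)
        show ?thesis unfolding n dhP.simps bb s using IH1 IH2 unfolding s by algebra
      qed
    qed
  qed
qed

lemma Pi_eig: assumes "y \<noteq> -1"
  shows "Piop a b (dhP N a b n) y = (-1)^n * dhP N a b n y"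
proof -
  have y: "y + 1 \<noteq> 0" using assms by (simp add: add_eq_0_iff)
  have "(y + 1) * Piop a b (dhP N a b n) y = (y + 1) * ((-1)^n * dhP N a b n y)"
  proof -
    have "(y + 1) * Piop a b (dhP N a b n) y = (y + 1 - (b - a)) * dhP N a b n (- y - 2) + (b - a) * dhP N a b n y"
      unfolding Piop_def using y by (simp add: field_simps)
    also have "\<dots> = (y + 1) * ((-1)^n * dhP N a b n y)" using pi_poly by simp
    finally show ?thesis .
  qed
  then show ?thesis using y by simp
qed

lemma Qop_Pi: assumes "x \<notin> {1, -1, 3, -3, -5}"
  shows "Qop N a b (Piop a b (dhP N a b n)) x = (-1)^n * Qop N a b (dhP N a b n) x"
proof -
  have "x + 4 \<noteq> -1" "x - 4 \<noteq> -1" "- x - 2 \<noteq> -1" "- x + 2 \<noteq> -1" using assms by auto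
  then show ?thesis unfolding Qop_def by (simp add: Pi_eig algebra_simps)
qed

lemma Hop_Pi: assumes "x \<notin> {1, -1, 3, -3, -5}"
  shows "Hop N a b (Piop a b (dhP N a b n)) x = (-1)^n * Hop N a b (dhP N a b n) x"
proof -
  have "x + 4 \<noteq> -1" "x - 4 \<noteq> -1" "- x - 2 \<noteq> -1" "- x + 2 \<noteq> -1" "x \<noteq> -1" using assms by auto
  then show ?thesis unfolding Hop_def by (simp add: Pi_eig algebra_simps)
qed

context
  fixes N :: nat and a b x :: real
  assumes hx: "x \<notin> {1, -1, 3, -3, -5}"
begin

lemma hx': "x + 1 \<noteq> 0" "x - 1 \<noteq> 0" "x + 3 \<noteq> 0" "x - 3 \<noteq> 0" "x + 5 \<noteq> 0"
    "1 - x^2 \<noteq> 0" "1 + x \<noteq> 0" "3 + x \<noteq> 0" "5 + x \<noteq> 0"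
proof -
  show "1 - x^2 \<noteq> 0"
  proof
    assume "1 - x^2 = 0"
    then have "(x - 1) * (x + 1) = 0" by (simp add: algebra_simps power2_eq_square)
    then show False using hx by auto
  qed
qed (use hx in auto)

lemma hx2: "x \<noteq> 1" "x \<noteq> -1" "x \<noteq> 3" "x \<noteq> -3" "x \<noteq> -5"
  "1 - x \<noteq> 0" "1 + x \<noteq> 0" "x - 1 \<noteq> 0" "x + 1 \<noteq> 0" "x - 3 \<noteq> 0" "x + 3 \<noteq> 0" "x + 5 \<noteq> 0"
  "3 - x \<noteq> 0" "3 + x \<noteq> 0" "5 + x \<noteq> 0" "- x - 1 \<noteq> 0" "- x + 3 \<noteq> 0" "-1 - x \<noteq> 0"
  "1 \<noteq> x" "-1 \<noteq> x" "3 \<noteq> x" "-3 \<noteq> x" "-5 \<noteq> x"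
  using hx by auto

lemma E2v: "E2 N a b x * (4*(x-1)*(x-3)) = -((x - (a+b) - 1) * (x + b - a - 3) * (x + (a+b) + 2 * real N + 1))"
  unfolding E2_def Let_def using hx2 by simp
lemma G2v: "G2 N a b x * ((1-x)*(1+x)*(x-3)) = (a - b) * (x - (a+b) - 1) * (x + (a+b) + 2 * real N + 1)"
proof -
  have "(1-x)*(1+x)*(x-3) = (1 - x^2) * (x - 3)" by (simp add: power2_eq_square algebra_simps)
  moreover have "(1 - x^2) * (x - 3) \<noteq> 0" using hx' by simp
  ultimately show ?thesis unfolding G2_def Let_def by simp
qed
lemma E1v: "E1 N a b x * (4*(x+1)*(x+3)) = (x + (a+b) + 3) * (x + a - b + 1) * (x - (a+b) - 2 * real N + 1)"
proof -
  have d: "4*(x+1)*(x+3) \<noteq> 0" unfolding mult_eq_0_iff using hx2 by simp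
  show ?thesis unfolding E1_def Let_def using d by (simp del: mult_eq_0_iff)
qed
lemma G1v: "G1 N a b x * ((1-x)*(1+x)*(x+3)) = (a+b) * ((a+b) + 2 + 2 * real N) * (x + 1 + a - b)"
proof -
  have "(1-x)*(1+x)*(x+3) = (1 - x^2) * (x + 3)" by (simp add: power2_eq_square algebra_simps)
  moreover have "(1 - x^2) * (x + 3) \<noteq> 0" using hx' by simp
  ultimately show ?thesis unfolding G1_def Let_def by simp
qed

abbreviation "MM \<equiv> (x+1)*(x-3)*((4*(x+1)*(x+3)) * (4*(x-1)*(x-3)) * ((1-x)*(1+x)*(x+3)) * ((1-x)*(1+x)*(x-3)))"

lemma MMnz: "MM \<noteq> 0" unfolding mult_eq_0_iff using hx2 by simp

lemma q0v: "(b-a)/(x+1) * (x+1) = b - a" using hx2 by simp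
lemma q2v: "(b-a)/(x-3) * (x-3) = b - a" using hx2 by simp

lemma Cb: "16*(b-a)*E2 N a b x*((b-a)/(x-3))+4*(b-a)*(x+1)*G2 N a b x*(1+(b-a)/(x-3)) = 0"
  apply (rule cancel_nz[OF _ MMnz])
  using E1v E2v G1v G2v q0v q2v by algebra

lemma Cd: "4*G2 N a b x*(x-3)*(x+1)+16*(b-a)*E2 N a b x*(1-(b-a)/(x-3))-4*(b-a)*(x+1)*G2 N a b x*((b-a)/(x-3)) = 0"
  apply (rule cancel_nz[OF _ MMnz])
  using E1v E2v G1v G2v q0v q2v by algebra

lemma Cc: "4*(x+1)^2*G1 N a b x -( -2*(b-a)*(2*x+2)*G1 N a b x*(-((b-a)/(x+1))) + 16*G1 N a b x
   - 8*(b-a)*G1 N a b x*(-((b-a)/(x+1)))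
   + (8*(b-a)*(E1 N a b x+E2 N a b x+G1 N a b x+G2 N a b x)-16*((2*a*b + 2*a*real N + a + b)/2))*(1-(b-a)/(x+1))) = 0"
  apply (rule cancel_nz[OF _ MMnz])
  using E1v E2v G1v G2v q0v q2v by algebra

lemma C0: "-( -4*(b-a)*(x+1)*G1 N a b x*(1+(b-a)/(x+1)) -16*(E1 N a b x+E2 N a b x+G1 N a b x+G2 N a b x)
   -8*(b-a)*G1 N a b x*(1+(b-a)/(x+1)) + 8*(b-a)*(E1 N a b x+E2 N a b x+G1 N a b x+G2 N a b x)*((b-a)/(x+1))
   +16*((a - b - 2 * real N)/2) -16*((2*a*b + 2*a*real N + a + b)/2)*((b-a)/(x+1))) = 0"
  apply (rule cancel_nz[OF _ MMnz])
  using E1v E2v G1v G2v q0v q2v by algebra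

lemma key:
  fixes f :: "real \<Rightarrow> real"
  shows "Q2op N a b f x = 2 * (b - a) * Qop N a b (Piop a b f) x
     + 16 * (Hop N a b f x + ((a - b)/2) * Hop N a b (Piop a b f) x
        + ((a - b - 2 * real N)/2) * f x
        - ((2*a*b + 2*a*real N + a + b)/2) * Piop a b f x)"
proof -
  have P1: "Piop a b f (x + 4) = f (-(x+4)-2) + (b-a)/(x+5) * (f (x+4) - f (-(x+4)-2))"
    unfolding Piop_def by (simp add: add.assoc)
  have P2: "Piop a b f (x - 4) = f (- x + 2) + (b-a)/(x-3) * (f (x-4) - f (- x + 2))"
    unfolding Piop_def by (simp add: algebra_simps)
  have P3: "Piop a b f (- x - 2) = f x + (-((b-a)/(x+1))) * (f (- x - 2) - f x)"
  proof -
    have "- x - 2 + 1 = - (x + 1)" by simp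
    moreover have "- (- x - 2) - 2 = x" by simp
    ultimately show ?thesis unfolding Piop_def by (simp only: divide_minus_right)
  qed
  have P4: "Piop a b f (- x + 2) = f (x - 4) + (-((b-a)/(x-3))) * (f (- x + 2) - f (x - 4))"
  proof -
    have "- x + 2 + 1 = - (x - 3)" by simp
    moreover have "- (- x + 2) - 2 = x - 4" by simp
    ultimately show ?thesis unfolding Piop_def by (simp only: divide_minus_right)
  qed
  have P0: "Piop a b f x = f (- x - 2) + (b-a)/(x+1) * (f x - f (- x - 2))"
    unfolding Piop_def ..
  show ?thesis
    unfolding Q2op_def Qop_def Hop_def P1 P2 P3 P4
    apply (subst (1 2 3 4 5) P0)
    apply (rule abs_id[where c="b-a" and d="(a-b)/2" and S="E1 N a b x + E2 N a b x + G1 N a b x + G2 N a b x"])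
    using Cb Cd Cc C0 by simp_all
qed

lemma Qop1: "Qop N a b (\<lambda>y. 1) x = 2 * (x - bcoef N a b 0)"
proof -
  have "E1 N a b x * 4 + E2 N a b x * (-4) + G1 N a b x * (-2*x-2) + G2 N a b x * (-2*x+2) - 2 * (x - (-1 - a + b)) = 0"
    apply (rule cancel_nz[OF _ MMnz])
    using E1v E2v G1v G2v by algebra
  then show ?thesis unfolding Qop_def by (simp add: bcoef_def)
qed

lemma Sall: "Hop N a b (dhP N a b n) x = 2 * real n * dhP N a b n x
  \<and> Qop N a b (dhP N a b n) x = 4 * dhP N a b (Suc n) x - 2 * (x - bcoef N a b n) * dhP N a b n x"
proof (induction n rule: less_induct)
  case (less n)
  show ?case
  proof (cases n)
    case 0
    show ?thesis unfolding 0 dhP_0_fun using Qop1 by (simp add: Hop_const algebra_simps)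
  next
    case (Suc m)
    define f where "f = dhP N a b m"
    define g where "g = dhP N a b (m - 1)"
    have IHm: "Hop N a b f x = 2 * real m * f x"
       "Qop N a b f x = 4 * dhP N a b (Suc m) x - 2 * (x - bcoef N a b m) * f x"
      using less[of m] Suc unfolding f_def by auto
    have IHg: "Hop N a b g x = 2 * real (m - 1) * g x"
       "Qop N a b g x = 4 * dhP N a b (Suc (m - 1)) x - 2 * (x - bcoef N a b (m - 1)) * g x"
      using less[of "m - 1"] Suc unfolding g_def by auto
    have fn: "dhP N a b (Suc m) = (\<lambda>y. (y - bcoef N a b m) * f y - ucoef N a b m * g y)"
      unfolding f_def g_def by (rule dhP_suc_fun)
    have px: "dhP N a b (Suc m) x = (x - bcoef N a b m) * f x - ucoef N a b m * g x"
      unfolding fn ..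
    have gs: "ucoef N a b m * dhP N a b (Suc (m - 1)) x = ucoef N a b m * f x"
      by (cases m) (simp_all add: u0 f_def)
    have ur: "ucoef N a b m * real (m - 1) = ucoef N a b m * (real m - 1)"
      by (cases m) (simp_all add: u0)
    have rs: "real (Suc m) = real m + 1" by simp
    have H: "Hop N a b (dhP N a b (Suc m)) x = 2 * real (Suc m) * dhP N a b (Suc m) x"
      unfolding fn Hop_step IHm IHg using px ur gs rs by algebra
    have p2: "dhP N a b (Suc (Suc m)) x = (x - bcoef N a b (Suc m)) * dhP N a b (Suc m) x - ucoef N a b (Suc m) * f x"
      unfolding f_def by simp
    have Q2: "Q2op N a b f x = 2 * (b - a) * ((-1)^m * Qop N a b f x)
     + 16 * (Hop N a b f x + ((a - b)/2) * ((-1)^m * Hop N a b f x)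
        + ((a - b - 2 * real N)/2) * f x
        - ((2*a*b + 2*a*real N + a + b)/2) * ((-1)^m * f x))"
      using key[of f] unfolding f_def Qop_Pi[OF hx] Hop_Pi[OF hx] Pi_eig[OF hx2(2)] .
    have Q: "Qop N a b (dhP N a b (Suc m)) x = x * Qop N a b f x + Q2op N a b f x - bcoef N a b m * Qop N a b f x - ucoef N a b m * Qop N a b g x"
      unfolding fn Qop_step ..
    have Qg: "ucoef N a b m * Qop N a b g x = ucoef N a b m * (4 * f x - 2 * (x - bcoef N a b (m - 1)) * g x)"
      using IHg(2) gs by algebra
    have QS: "Qop N a b (dhP N a b (Suc m)) x = 4 * dhP N a b (Suc (Suc m)) x - 2 * (x - bcoef N a b (Suc m)) * dhP N a b (Suc m) x"
    proof (cases "even m")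
      case True
      have s: "(-1::real)^m = 1" using True by simp
      have b1: "bcoef N a b m = -1 - a + b" "bcoef N a b (Suc m) = -1 + a - b" using True by (simp_all add: bcoef_def)
      have bm: "ucoef N a b m * bcoef N a b (m - 1) = ucoef N a b m * (-1 + a - b)"
        using True by (cases m) (simp_all add: u0 bcoef_def)
      have u: "ucoef N a b m = 4 * real m * (real N + 1 - real m)"
         "ucoef N a b (Suc m) = 4 * (a + (real m + 1)) * (b + real N + 1 - (real m + 1))"
        using True by (simp_all add: ucoef_def algebra_simps)
      have Q2': "Q2op N a b f x = 2*(b-a)*Qop N a b f x + 16*Hop N a b f x + 8*(a-b)*Hop N a b f x
          + 8*(a-b-2*real N)*f x - 8*(2*a*b+2*a*real N+a+b)*f x"
        using Q2 unfolding s by (simp add: field_simps)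
      show ?thesis unfolding Q Qg using Q2' IHm px p2 b1 bm u by algebra
    next
      case False
      have s: "(-1::real)^m = -1" using False by simp
      have b1: "bcoef N a b m = -1 + a - b" "bcoef N a b (Suc m) = -1 - a + b" using False by (simp_all add: bcoef_def)
      have bm: "ucoef N a b m * bcoef N a b (m - 1) = ucoef N a b m * (-1 - a + b)"
        using False by (cases m) (simp_all add: u0 bcoef_def)
      have u: "ucoef N a b m = 4 * (a + real m) * (b + real N + 1 - real m)"
         "ucoef N a b (Suc m) = 4 * (real m + 1) * (real N + 1 - (real m + 1))"
        using False by (simp_all add: ucoef_def algebra_simps)
      have Q2': "Q2op N a b f x = -2*(b-a)*Qop N a b f x + 16*Hop N a b f x - 8*(a-b)*Hop N a b f x
          + 8*(a-b-2*real N)*f x + 8*(2*a*b+2*a*real N+a+b)*f x"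
        using Q2 unfolding s by (simp add: field_simps)
      show ?thesis unfolding Q Qg using Q2' IHm px p2 b1 bm u by algebra
    qed
    show ?thesis unfolding Suc using H QS by simp
  qed
qed

end

lemma contP0: "isCont (dhP N a b n) z"
proof (induction n arbitrary: z rule: less_induct)
  case (less n)
  show ?case
  proof (cases n)
    case 0 then show ?thesis by (simp add: dhP_0_fun)
  next
    case (Suc m)
    have "isCont (dhP N a b m) z" "isCont (dhP N a b (m - 1)) z" using less Suc by auto
    then show ?thesis unfolding Suc dhP_suc_fun by (intro continuous_intros)
  qed
qed

lemma contP[continuous_intros]: "isCont h z \<Longrightarrow> isCont (\<lambda>y. dhP N a b n (h y)) z"
  by (rule isCont_o2[OF _ contP0])

lemma contH: "isCont (\<lambda>y. Hop N a b (dhP N a b n) y) (-5)"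
  unfolding Hop_def E1_def E2_def G1_def G2_def Let_def
  by (intro continuous_intros) (simp_all add: power2_eq_square)

theorem mainTheorem8:
  fixes N n :: nat and \<alpha> \<beta> x :: real
  assumes "odd N" and "N > 0" and "n \<le> N"
    and "x \<notin> {1, -1, 3, -3}"
  shows "Hop N \<alpha> \<beta> (dhP N \<alpha> \<beta> n) x = 2 * real n * dhP N \<alpha> \<beta> n x"
proof (cases "x = -5")
  case False
  then have "x \<notin> {1, -1, 3, -3, -5}" using assms(4) by auto
  then show ?thesis using Sall by blast
next
  case True
  let ?F = "\<lambda>y. Hop N \<alpha> \<beta> (dhP N \<alpha> \<beta> n) y"
  let ?G = "\<lambda>y. 2 * real n * dhP N \<alpha> \<beta> n y"
  have h: "\<forall>y. y \<noteq> -5 \<and> dist y (-5) < 1 \<longrightarrow> ?G y = ?F y"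
  proof (intro allI impI)
    fix y :: real assume "y \<noteq> -5 \<and> dist y (-5) < 1"
    then have "y \<notin> {1, -1, 3, -3, -5}" by (auto simp: dist_real_def)
    then show "?G y = ?F y" using Sall by metis
  qed
  have ev: "eventually (\<lambda>y. ?G y = ?F y) (at (-5))"
    unfolding eventually_at using h by (intro exI[of _ 1]) auto
  have "?F \<midarrow>(-5)\<rightarrow> ?F (-5)" using contH isCont_def by blast
  moreover have "isCont ?G (-5)" by (intro continuous_intros)
  then have "?G \<midarrow>(-5)\<rightarrow> ?G (-5)" using isCont_def by blast
  then have "?F \<midarrow>(-5)\<rightarrow> ?G (-5)" using ev by (rule Lim_transform_eventually)
  ultimately have "?F (-5) = ?G (-5)" using LIM_unique by blast
  then show ?thesis using True by simp
qed

end
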